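(* Let $\{X_t\}$ be a Geo-INAR(1) process with $\mu>0$ and $\alpha\in(0,\mu/(1+\mu))$. For $h\ge1$ let $\mu_\varepsilon^{(h)}=(1-\alpha^h)\mu$, $\pi_\star^{(h)}=1-\frac{\alpha^h}{1+\mu_\varepsilon^{(h)}}$, $p^{(h)}=\frac{\mu_\varepsilon^{(h)}-\alpha^h}{1+\mu_\varepsilon^{(h)}-\alpha^h}$ and $p_{\varepsilon^{(h)}}(j)=\frac{(\mu_\varepsilon^{(h)})^j}{(1+\mu_\varepsilon^{(h)})^{j+1}}$. Then the $h$-step transition probabilities $p_{ij}^{(h)}=P(X_{t+h}=j\mid X_t=i)$ are, for all $j\ge0$, $p_{0j}^{(h)}=p_{\varepsilon^{(h)}}(j)$ and, for $i\ge1$, $$p_{ij}^{(h)}=p_{\varepsilon^{(h)}}(j)\Big[\big(\pi_\star^{(h)}\big)^{i}+\sum_{m=1}^{j}\sum_{l=1}^{m}\Big(1+\frac{1}{\mu_\varepsilon^{(h)}}\Big)^{m}A_l^i\big(\pi_\star^{(h)}\big)B_l^m\big(p^{(h)}\big)\Big],$$ where $A_l^i(q)=\binom{i+l-1}{l}q^i(1-q)^l$ and $B_l^m(r)=\binom{m-1}{l-1}r^{m-l}(1-r)^l$.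
   Context: Geo-INAR(1) process: fix $\mu>0$, $\alpha\in(0,1)$, $\mu_\varepsilon=(1-\alpha)\mu$, $\pi=1-\alpha/\mu_\varepsilon$. Let $\{\varepsilon_t\}$ be i.i.d. $\mathrm{Geo}(\mu_\varepsilon)$ and, for each $t$, let $\{G_{t,i}\}_{i\ge1}$ be i.i.d. $\mathrm{ZMG}(\pi,\mu_\varepsilon)$, all mutually independent. The process satisfies $X_t=\sum_{i=1}^{X_{t-1}}G_{t,i}+\varepsilon_t$, $\varepsilon_t$ independent of $X_{t-h}$ for $h\ge1$, and $X_t\sim\mathrm{Geo}(\mu)$ for all $t$. $\mathrm{Geo}(m)$ has $P(k)=\frac{m^k}{(1+m)^{k+1}}$; $\mathrm{ZMG}(\pi,m)$ has $P(0)=\pi+\frac{1-\pi}{1+m}$, $P(k)=(1-\pi)\frac{m^k}{(1+m)^{k+1}}$, $k\ge1$. *)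

theory Defs
  imports "HOL-Probability.Probability"
begin

definition geo_p :: "real \<Rightarrow> nat \<Rightarrow> real" where
  "geo_p m k = m ^ k / (1 + m) ^ (k + 1)"

definition zmg_p :: "real \<Rightarrow> real \<Rightarrow> nat \<Rightarrow> real" where
  "zmg_p p m k = (if k = 0 then p + (1 - p) / (1 + m) else (1 - p) * (m ^ k / (1 + m) ^ (k + 1)))"

definition coefA :: "nat \<Rightarrow> nat \<Rightarrow> real \<Rightarrow> real" where
  "coefA l i q = real ((i + l - 1) choose l) * q ^ i * (1 - q) ^ l"

definition coefB :: "nat \<Rightarrow> nat \<Rightarrow> real \<Rightarrow> real" where
  "coefB l m r = real ((m - 1) choose (l - 1)) * r ^ (m - l) * (1 - r) ^ l"

end

theory Submission
  imports Defs
begin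


definition gser :: "real \<Rightarrow> real fps" where "gser c = Abs_fps (\<lambda>n. c ^ n)"

lemma gser_nth[simp]: "fps_nth (gser c) n = c ^ n" by (simp add: gser_def)

lemma gser_mult: "gser c * (1 - fps_const c * fps_X) = 1"
proof -
  have "gser c * (1 - fps_const c * fps_X) = gser c - fps_const c * (fps_X * gser c)"
    by (simp add: algebra_simps)
  also have "\<dots> = 1"
  proof (rule fps_ext)
    fix n show "fps_nth (gser c - fps_const c * (fps_X * gser c)) n = fps_nth 1 n"
      by (cases n) (simp_all add: fps_X_mult_nth)
  qed
  finally show ?thesis .
qed

lemma gser_pow_nth: "fps_nth (gser c ^ k) n = real ((k + n - 1) choose n) * c ^ n"
proof (induction k arbitrary: n)
  case 0 then show ?case by (cases n) auto
next
  case (Suc k)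
  have "fps_nth (gser c ^ Suc k) n = (\<Sum>j=0..n. c ^ j * (real ((k + (n - j) - 1) choose (n - j)) * c ^ (n - j)))"
    by (simp add: fps_mult_nth Suc)
  also have "\<dots> = c ^ n * (\<Sum>j=0..n. real ((k + (n - j) - 1) choose (n - j)))"
    by (subst sum_distrib_left, rule sum.cong[OF refl])
       (auto simp: mult_ac power_add[symmetric])
  also have "(\<Sum>j=0..n. real ((k + (n - j) - 1) choose (n - j))) = (\<Sum>j=0..n. real ((k + j - 1) choose j))"
    by (rule sum.reindex_bij_witness[where i="\<lambda>j. n - j" and j="\<lambda>j. n - j"]) auto
  also have "\<dots> = real ((k + n) choose n)"
  proof (cases k)
    case 0
    have "(\<Sum>j=0..n. real ((j - 1) choose j)) = (\<Sum>j\<in>{0}. real ((j - 1) choose j))"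
      by (rule sum.mono_neutral_right) auto
    then show ?thesis using 0 by simp
  next
    case (Suc r)
    have "(\<Sum>j=0..n. real ((k + j - 1) choose j)) = real (\<Sum>j\<le>n. (r + j) choose j)"
      by (simp add: Suc atMost_atLeast0)
    also have "\<dots> = real ((k + n) choose n)" by (subst sum_choose_lower) (simp add: Suc)
    finally show ?thesis .
  qed
  finally show ?case by simp
qed

definition Yf :: "real \<Rightarrow> real fps" where "Yf p = fps_const (1 - p) * fps_X * gser p"

lemma Yf_0[simp]: "fps_nth (Yf p) 0 = 0" by (simp add: Yf_def)

lemma Yf_mult: "Yf p * (1 - fps_const p * fps_X) = fps_const (1 - p) * fps_X"
  using gser_mult[of p] by (simp add: Yf_def mult.assoc)

lemma Yf_pow_nth: "fps_nth (Yf p ^ l) m =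
   (if l \<le> m then real ((m - 1) choose (m - l)) * p ^ (m - l) * (1 - p) ^ l else 0)"
proof -
  have "Yf p ^ l = fps_const ((1 - p) ^ l) * (fps_X ^ l * gser p ^ l)"
    by (simp add: Yf_def power_mult_distrib fps_const_power mult.assoc)
  then show ?thesis
    by (auto simp: fps_X_power_mult_nth gser_pow_nth)
qed

definition Phif :: "real \<Rightarrow> real \<Rightarrow> real fps" where
  "Phif me a = Abs_fps (\<lambda>n. if n = 0 then 1 - a / (1 + me) else a * (me / (1 + me)) ^ (n - 1) / (1 + me) ^ 2)"

lemma Phif_mult:
  assumes "me > 0" "0 \<le> a" "a < 1"
  shows "Phif me a * (1 - fps_const (me / (1 + me)) * fps_X)
       = fps_const (1 - a / (1 + me)) * (1 - fps_const ((me - a) / (1 + me - a)) * fps_X)"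
proof (rule fps_ext)
  fix n :: nat
  have L: "Phif me a * (1 - fps_const (me / (1 + me)) * fps_X) = Phif me a - fps_const (me / (1 + me)) * (fps_X * Phif me a)"
    by (simp add: algebra_simps)
  have R: "fps_const (1 - a / (1 + me)) * (1 - fps_const ((me - a) / (1 + me - a)) * fps_X)
     = fps_const (1 - a / (1 + me)) - fps_const ((1 - a / (1 + me)) * ((me - a) / (1 + me - a))) * fps_X"
    by (simp add: algebra_simps)
  have one: "n = 1 \<Longrightarrow> a / (1 + me)^2 - me / (1 + me) * (1 - a / (1 + me)) = - ((1 - a / (1 + me)) * ((me - a) / (1 + me - a)))"
  proof -
    have d: "1 + me - a > 0" "1 + me > 0" using assms by auto
    have e0: "1 - a / (1 + me) = (1 + me - a) / (1 + me)" using d by (simp add: field_simps)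
    have e: "(1 - a / (1 + me)) * ((me - a) / (1 + me - a)) = (me - a) / (1 + me)"
      unfolding e0 using d by simp
    have f: "a / (1 + me)^2 - me / (1 + me) * (1 - a / (1 + me)) = - ((me - a) / (1 + me))"
    proof -
      have "a / (1 + me)^2 - me / (1 + me) * (1 - a / (1 + me)) = (a - me * (1 + me - a)) / (1 + me)^2"
        using d by (simp add: field_simps power2_eq_square) (simp only: add_divide_distrib[symmetric], simp add: algebra_simps)
      also have "\<dots> = (a - me) * (1 + me) / (1 + me)^2" by (simp add: algebra_simps)
      also have "\<dots> = - ((me - a) / (1 + me))" using d by (simp add: power2_eq_square) (simp add: field_simps)
      finally show ?thesis .
    qed
    show ?thesis unfolding e f ..
  qed
  have two: "n \<ge> 2 \<Longrightarrow> a * (me / (1 + me)) ^ (n - 1) / (1 + me) ^ 2 - me / (1 + me) * (a * (me / (1 + me)) ^ (n - 2) / (1 + me) ^ 2) = 0"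
  proof -
    assume "n \<ge> 2"
    then have "(me / (1 + me)) ^ (n - 1) = me / (1 + me) * (me / (1 + me)) ^ (n - 2)"
    proof -
      obtain k where "n = Suc (Suc k)" using \<open>n \<ge> 2\<close> by (metis add_2_eq_Suc le_Suc_ex)
      then show ?thesis by simp
    qed
    then show ?thesis by simp
  qed
  show "fps_nth (Phif me a * (1 - fps_const (me / (1 + me)) * fps_X)) n =
     fps_nth (fps_const (1 - a / (1 + me)) * (1 - fps_const ((me - a) / (1 + me - a)) * fps_X)) n"
  proof (cases n)
    case 0 then show ?thesis unfolding L R by (simp add: Phif_def)
  next
    case (Suc k) note k = this
    show ?thesis
    proof (cases k)
      case 0
      with k show ?thesis unfolding L R using one by (simp add: Phif_def fps_X_mult_nth)
    next
      case (Suc k')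
      with k show ?thesis unfolding L R using two by (simp add: Phif_def fps_X_mult_nth)
    qed
  qed
qed

lemma Phif_eq:
  assumes "me > 0" "0 \<le> a" "a < 1"
  defines "ps \<equiv> 1 - a / (1 + me)" and "p \<equiv> (me - a) / (1 + me - a)"
  shows "Phif me a = fps_const ps * (gser (1 - ps) oo Yf p)"
proof -
  have d: "1 + me - a > 0" "1 + me > 0" using assms by auto
  have r: "me / (1 + me) = p + (1 - ps) * (1 - p)"
  proof -
    have u: "1 - ps = a / (1 + me)" by (simp add: ps_def)
    have q: "1 - p = 1 / (1 + me - a)"
    proof -
      have "1 - p = (1 + me - a) / (1 + me - a) - (me - a) / (1 + me - a)" using d by (simp add: p_def)
      also have "\<dots> = 1 / (1 + me - a)" by (simp only: diff_divide_distrib[symmetric]) simp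
      finally show ?thesis .
    qed
    have "p + (1 - ps) * (1 - p) = (me - a) / (1 + me - a) + a / (1 + me) * (1 / (1 + me - a))"
      unfolding u q by (simp add: p_def)
    also have "\<dots> = (me - a) * (1 + me) / ((1 + me) * (1 + me - a)) + a / ((1 + me) * (1 + me - a))"
      using d by simp
    also have "\<dots> = ((me - a) * (1 + me) + a) / ((1 + me) * (1 + me - a))"
      by (simp only: add_divide_distrib[symmetric])
    also have "(me - a) * (1 + me) + a = me * (1 + me - a)" by (simp add: algebra_simps)
    finally show ?thesis using d by simp
  qed
  let ?u = "1 - ps"
  have "Phif me a * (1 - fps_const ?u * Yf p) * (1 - fps_const p * fps_X)
      = Phif me a * ((1 - fps_const p * fps_X) - fps_const ?u * (Yf p * (1 - fps_const p * fps_X)))"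
    by (simp add: algebra_simps)
  also have "\<dots> = Phif me a * (1 - fps_const (me / (1 + me)) * fps_X)"
  proof -
    have e: "fps_const (p + ?u * (1 - p)) = fps_const p + fps_const ?u * fps_const (1 - p)" by simp
    have "(1 - fps_const p * fps_X) - fps_const ?u * (fps_const (1 - p) * fps_X)
        = (1::real fps) - (fps_const p + fps_const ?u * fps_const (1 - p)) * fps_X"
      by (simp add: algebra_simps del: fps_const_mult fps_const_add)
    then show ?thesis unfolding Yf_mult r e by simp
  qed
  also have "\<dots> = fps_const ps * (1 - fps_const p * fps_X)"
    using Phif_mult[OF assms(1-3)] by (simp add: ps_def p_def)
  finally have A: "Phif me a * (1 - fps_const ?u * Yf p) = fps_const ps"
  proof -
    assume h: "Phif me a * (1 - fps_const ?u * Yf p) * (1 - fps_const p * fps_X) = fps_const ps * (1 - fps_const p * fps_X)"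
    have "(1 - fps_const p * fps_X :: real fps) \<noteq> 0"
    proof
      assume "(1 - fps_const p * fps_X :: real fps) = 0"
      then have "fps_nth (1 - fps_const p * fps_X :: real fps) 0 = 0" by simp
      then show False by simp
    qed
    then show ?thesis using h by simp
  qed
  have B: "(gser ?u oo Yf p) * (1 - fps_const ?u * Yf p) = 1"
  proof -
    have "(1 - fps_const ?u * fps_X) oo Yf p = 1 - fps_const ?u * Yf p"
      by (simp add: fps_compose_sub_distrib fps_compose_mult_distrib)
    then have "(gser ?u oo Yf p) * (1 - fps_const ?u * Yf p) = (gser ?u * (1 - fps_const ?u * fps_X)) oo Yf p"
      by (simp add: fps_compose_mult_distrib)
    then show ?thesis by (simp add: gser_mult)
  qed
  have "Phif me a = Phif me a * ((1 - fps_const ?u * Yf p) * (gser ?u oo Yf p))"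
    using B by (simp add: mult.commute)
  also have "\<dots> = fps_const ps * (gser ?u oo Yf p)"
    using A by (simp add: mult.assoc[symmetric])
  finally show ?thesis .
qed

lemma Phif_pow_nth:
  assumes "me > 0" "0 \<le> a" "a < 1"
  defines "ps \<equiv> 1 - a / (1 + me)" and "p \<equiv> (me - a) / (1 + me - a)"
  shows "fps_nth (Phif me a ^ i) m =
     (if m = 0 then ps ^ i else (\<Sum>l = 1..m. coefA l i ps * coefB l m p))"
proof -
  have "Phif me a ^ i = fps_const (ps ^ i) * (gser (1 - ps) ^ i oo Yf p)"
    using Phif_eq[OF assms(1-3)] by (simp add: ps_def p_def power_mult_distrib fps_const_power fps_compose_power)
  then have "fps_nth (Phif me a ^ i) m = ps ^ i * (\<Sum>l = 0..m. real ((i + l - 1) choose l) * (1 - ps) ^ l * fps_nth (Yf p ^ l) m)"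
    by (simp add: fps_compose_nth gser_pow_nth)
  also have "\<dots> = (if m = 0 then ps ^ i else (\<Sum>l = 1..m. coefA l i ps * coefB l m p))"
  proof (cases "m = 0")
    case True then show ?thesis by (simp add: Yf_pow_nth)
  next
    case False
    have "(\<Sum>l = 0..m. real ((i + l - 1) choose l) * (1 - ps) ^ l * fps_nth (Yf p ^ l) m)
        = (\<Sum>l = 1..m. real ((i + l - 1) choose l) * (1 - ps) ^ l * fps_nth (Yf p ^ l) m)"
      using False by (simp add: sum.atLeast_Suc_atMost Yf_pow_nth)
    also have "ps ^ i * \<dots> = (\<Sum>l = 1..m. coefA l i ps * coefB l m p)"
      unfolding sum_distrib_left
    proof (rule sum.cong[OF refl])
      fix l assume l: "l \<in> {1..m}"
      then have "(m - 1) choose (m - l) = (m - 1) choose (l - 1)"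
        using binomial_symmetric[of "l - 1" "m - 1"] by (auto simp: Suc_diff_le)
      then show "ps ^ i * (real ((i + l - 1) choose l) * (1 - ps) ^ l * fps_nth (Yf p ^ l) m) = coefA l i ps * coefB l m p"
        using l by (simp add: Yf_pow_nth coefA_def coefB_def)
    qed
    finally show ?thesis using False by simp
  qed
  finally show ?thesis .
qed

definition Psif :: "real \<Rightarrow> real fps" where "Psif me = Abs_fps (geo_p me)"

lemma pow_shift_aux:
  fixes x y :: real assumes "x > 0" "y > 0"
  shows "x ^ k / y ^ (k + 1) = x ^ (m + k) / y ^ (m + k + 1) * (y / x) ^ m"
proof -
  have "x ^ (m + k) / y ^ (m + k + 1) * (y / x) ^ m = (x ^ m * y ^ m) * x ^ k / ((x ^ m * y ^ m) * y ^ (k + 1))"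
    by (simp add: power_add power_divide mult_ac)
  also have "\<dots> = x ^ k / y ^ (k + 1)"
    using assms by (subst mult_divide_mult_cancel_left) auto
  finally show ?thesis by simp
qed

lemma geo_shift:
  assumes "me > 0" "m \<le> j"
  shows "geo_p me (j - m) = geo_p me j * (1 + 1 / me) ^ m"
proof -
  obtain k where j: "j = m + k" using assms(2) le_Suc_ex by blast
  have "1 + 1 / me = (1 + me) / me" using assms by (simp add: field_simps)
  then show ?thesis using assms pow_shift_aux[of me "1 + me" k m] unfolding j geo_p_def
    by simp
qed

lemma D_formula:
  assumes "me > 0" "0 \<le> a" "a < 1"
  defines "ps \<equiv> 1 - a / (1 + me)" and "p \<equiv> (me - a) / (1 + me - a)"
  shows "fps_nth (Psif me * Phif me a ^ i) j = geo_p me j * (ps ^ i + (\<Sum>m = 1..j. \<Sum>l = 1..m.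
                    (1 + 1 / me) ^ m * coefA l i ps * coefB l m p))"
proof -
  have "fps_nth (Psif me * Phif me a ^ i) j = (\<Sum>k = 0..j. geo_p me k * fps_nth (Phif me a ^ i) (j - k))"
    by (simp add: fps_mult_nth Psif_def)
  also have "\<dots> = (\<Sum>m = 0..j. geo_p me (j - m) * fps_nth (Phif me a ^ i) m)"
    by (rule sum.reindex_bij_witness[where i="\<lambda>j'. j - j'" and j="\<lambda>j'. j - j'"]) auto
  also have "\<dots> = (\<Sum>m = 0..j. geo_p me j * ((1 + 1 / me) ^ m * fps_nth (Phif me a ^ i) m))"
    by (rule sum.cong[OF refl]) (simp add: geo_shift[OF assms(1)])
  also have "\<dots> = geo_p me j * (\<Sum>m = 0..j. (1 + 1 / me) ^ m * fps_nth (Phif me a ^ i) m)"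
    by (simp add: sum_distrib_left)
  also have "(\<Sum>m = 0..j. (1 + 1 / me) ^ m * fps_nth (Phif me a ^ i) m)
      = ps ^ i + (\<Sum>m = 1..j. (1 + 1 / me) ^ m * fps_nth (Phif me a ^ i) m)"
    by (simp add: sum.atLeast_Suc_atMost Phif_pow_nth[OF assms(1-3)] ps_def)
  also have "(\<Sum>m = 1..j. (1 + 1 / me) ^ m * fps_nth (Phif me a ^ i) m)
     = (\<Sum>m = 1..j. \<Sum>l = 1..m. (1 + 1 / me) ^ m * coefA l i ps * coefB l m p)"
    by (rule sum.cong[OF refl]) (simp add: Phif_pow_nth[OF assms(1-3)] ps_def p_def sum_distrib_left mult.assoc)
  finally show ?thesis .
qed



lemma fps_nonneg_mult:
  assumes "\<And>n. fps_nth F n \<ge> (0::real)" "\<And>n. fps_nth G n \<ge> 0"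
  shows "fps_nth (F * G) n \<ge> 0"
  by (simp add: fps_mult_nth assms sum_nonneg)

lemma fps_nonneg_pow:
  assumes "\<And>n. fps_nth F n \<ge> (0::real)"
  shows "fps_nth (F ^ i) n \<ge> 0"
proof (induction i arbitrary: n)
  case 0 then show ?case by (simp add: fps_one_nth)
next
  case (Suc i) then show ?case by (simp add: fps_nonneg_mult assms)
qed

lemma psum_mult:
  fixes s :: real
  assumes F0: "\<And>n. fps_nth F n \<ge> 0" and G0: "\<And>n. fps_nth G n \<ge> 0" and s: "s \<ge> 0"
    and sF: "(\<lambda>n. fps_nth F n * s ^ n) sums x" and sG: "(\<lambda>n. fps_nth G n * s ^ n) sums y"
  shows "(\<lambda>n. fps_nth (F * G) n * s ^ n) sums (x * y)"
proof -
  let ?a = "\<lambda>n. fps_nth F n * s ^ n" and ?b = "\<lambda>n. fps_nth G n * s ^ n"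
  have na: "summable (\<lambda>k. norm (?a k))"
    using sF F0 s by (simp add: abs_of_nonneg sums_summable)
  have nb: "summable (\<lambda>k. norm (?b k))"
    using sG G0 s by (simp add: abs_of_nonneg sums_summable)
  have "(\<lambda>k. \<Sum>i\<le>k. ?a i * ?b (k - i)) sums ((\<Sum>k. ?a k) * (\<Sum>k. ?b k))"
    by (rule Cauchy_product_sums[OF na nb])
  moreover have "(\<Sum>k. ?a k) = x" "(\<Sum>k. ?b k) = y" using sF sG sums_unique by metis+
  moreover have "\<And>k. (\<Sum>i\<le>k. ?a i * ?b (k - i)) = fps_nth (F * G) k * s ^ k"
  proof -
    fix k
    have "(\<Sum>i\<le>k. ?a i * ?b (k - i)) = (\<Sum>i=0..k. fps_nth F i * fps_nth G (k - i) * s ^ k)"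
      by (auto simp: atMost_atLeast0 mult_ac power_add[symmetric] intro!: sum.cong)
    then show "(\<Sum>i\<le>k. ?a i * ?b (k - i)) = fps_nth (F * G) k * s ^ k"
      by (simp add: fps_mult_nth sum_distrib_right)
  qed
  ultimately show ?thesis by simp
qed

lemma psum_pow:
  fixes s :: real
  assumes F0: "\<And>n. fps_nth F n \<ge> 0" and s: "s \<ge> 0"
    and sF: "(\<lambda>n. fps_nth F n * s ^ n) sums x"
  shows "(\<lambda>n. fps_nth (F ^ i) n * s ^ n) sums (x ^ i)"
proof (induction i)
  case 0
  have "(\<lambda>n. fps_nth (F ^ 0) n * s ^ n) = (\<lambda>n. if n = 0 then 1 else 0)"
    by (auto simp: fps_one_nth)
  then show ?case using sums_single[of 0 "\<lambda>_. 1::real"] by simp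
next
  case (Suc i)
  then show ?case using psum_mult[OF F0 fps_nonneg_pow[OF F0] s sF Suc] by simp
qed

lemma Phif_nonneg:
  assumes "me > 0" "0 \<le> a" "a < 1"
  shows "fps_nth (Phif me a) n \<ge> 0"
  using assms by (auto simp: Phif_def)

lemma Psif_nonneg:
  assumes "me > 0"
  shows "fps_nth (Psif me) n \<ge> 0"
  using assms by (auto simp: Psif_def geo_p_def)

lemma Psif_sums:
  assumes "me > 0" "0 \<le> s" "s < 1"
  shows "(\<lambda>n. fps_nth (Psif me) n * s ^ n) sums (1 / (1 + me * (1 - s)))"
proof -
  have r: "norm (me / (1 + me) * s) < 1"
  proof -
    have "me * s < me * 1" using assms by (intro mult_strict_left_mono) auto
    then have h: "me * s < 1 + me" by linarith
    show ?thesis using assms h by (auto simp: abs_mult field_simps)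
  qed
  have "(\<lambda>n. 1 / (1 + me) * (me / (1 + me) * s) ^ n) sums (1 / (1 + me) * (1 / (1 - me / (1 + me) * s)))"
    by (rule sums_mult[OF geometric_sums[OF r]])
  moreover have "(\<lambda>n. 1 / (1 + me) * (me / (1 + me) * s) ^ n) = (\<lambda>n. fps_nth (Psif me) n * s ^ n)"
    by (auto simp: Psif_def geo_p_def power_mult_distrib power_divide)
  moreover have "1 / (1 + me) * (1 / (1 - me / (1 + me) * s)) = 1 / (1 + me * (1 - s))"
    using assms by (simp add: field_simps)
  ultimately show ?thesis by simp
qed

lemma gen_alg:
  fixes Q P a s :: real
  assumes "Q > 0" "P > 0" 
  shows "P = 1 + (Q - 1) * (1 - s) \<Longrightarrow> a * s / (Q * P) + (1 - a / Q) = 1 - a * (1 - s) / P"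
proof -
  assume h: "P = 1 + (Q - 1) * (1 - s)"
  have "a * s / (Q * P) + (1 - a / Q) - (1 - a * (1 - s) / P) = a * (s - P + Q * (1 - s)) / (Q * P)"
    using assms by (simp add: field_simps)
  also have "s - P + Q * (1 - s) = 0" using h by (simp add: algebra_simps)
  finally show ?thesis by simp
qed

lemma Phif_sums:
  assumes "me > 0" "0 \<le> a" "a < 1" "0 \<le> s" "s < 1"
  shows "(\<lambda>n. fps_nth (Phif me a) n * s ^ n) sums (1 - a * (1 - s) / (1 + me * (1 - s)))"
proof -
  have r: "norm (me / (1 + me) * s) < 1"
  proof -
    have "me * s < me * 1" using assms by (intro mult_strict_left_mono) auto
    then have h: "me * s < 1 + me" by linarith
    show ?thesis using assms h by (auto simp: abs_mult field_simps)
  qed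
  have "(\<lambda>n. a * s / (1 + me)^2 * (me / (1 + me) * s) ^ n) sums (a * s / (1 + me)^2 * (1 / (1 - me / (1 + me) * s)))"
    by (rule sums_mult[OF geometric_sums[OF r]])
  moreover have "(\<lambda>n. a * s / (1 + me)^2 * (me / (1 + me) * s) ^ n) = (\<lambda>n. fps_nth (Phif me a) (Suc n) * s ^ (Suc n))"
    by (auto simp: Phif_def power_mult_distrib power_divide mult_ac)
  ultimately have "(\<lambda>n. fps_nth (Phif me a) n * s ^ n) sums (a * s / (1 + me)^2 * (1 / (1 - me / (1 + me) * s)) + (1 - a / (1 + me)))"
    using sums_Suc_iff[where f="\<lambda>n. fps_nth (Phif me a) n * s ^ n"] by (simp add: Phif_def)
  moreover have "a * s / (1 + me)^2 * (1 / (1 - me / (1 + me) * s)) + (1 - a / (1 + me)) = 1 - a * (1 - s) / (1 + me * (1 - s))"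
  proof -
    have d: "1 + me > 0" "1 + me * (1 - s) > 0" using assms by (auto simp: add_pos_nonneg)
    have "1 - me / (1 + me) * s = (1 + me * (1 - s)) / (1 + me)" using d by (simp add: field_simps)
    then have e1: "a * s / (1 + me)^2 * (1 / (1 - me / (1 + me) * s)) = a * s / ((1 + me) * (1 + me * (1 - s)))"
      using d by (simp add: power2_eq_square)
    have "a * s / ((1 + me) * (1 + me * (1 - s))) + (1 - a / (1 + me)) = 1 - a * (1 - s) / (1 + me * (1 - s))"
      using gen_alg[OF d, where a=a and s=s] by simp
    then show ?thesis unfolding e1 .
  qed
  ultimately show ?thesis by metis
qed

lemma D_sums:
  assumes "me > 0" "0 \<le> a" "a < 1" "0 \<le> s" "s < 1"
  shows "(\<lambda>n. fps_nth (Psif me * Phif me a ^ i) n * s ^ n) sums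
    (1 / (1 + me * (1 - s)) * (1 - a * (1 - s) / (1 + me * (1 - s))) ^ i)"
  by (rule psum_mult[OF Psif_nonneg[OF assms(1)] fps_nonneg_pow[OF Phif_nonneg[OF assms(1-3)]] assms(4)
      Psif_sums[OF assms(1,4,5)] psum_pow[OF Phif_nonneg[OF assms(1-3)] assms(4) Phif_sums[OF assms]]])



lemma coef_small:
  fixes d :: "nat \<Rightarrow> real"
  assumes bound: "\<And>n. \<bar>d n\<bar> \<le> K * R ^ n" and R: "R \<ge> 1" and s: "0 < s" "s \<le> 1 / (2 * R)"
    and sm: "(\<lambda>n. d (Suc n + k) * s ^ Suc n) sums (- d k)"
  shows "\<bar>d k\<bar> \<le> 2 * K * R ^ (k + 1) * s"
proof -
  have Rs: "R * s \<le> 1 / 2" using s R by (simp add: field_simps)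
  have Rs0: "R * s \<ge> 0" using s R by simp
  have K: "K \<ge> 0" using bound[of 0] by simp
  let ?g = "\<lambda>n. K * R ^ (k + 1) * s * (R * s) ^ n"
  have gs: "?g sums (K * R ^ (k + 1) * s * (1 / (1 - R * s)))"
    using Rs Rs0 by (intro sums_mult geometric_sums) simp
  have le: "norm (d (Suc n + k) * s ^ Suc n) \<le> ?g n" for n
  proof -
    have "norm (d (Suc n + k) * s ^ Suc n) = \<bar>d (Suc n + k)\<bar> * s ^ Suc n"
      using s by (simp add: abs_mult)
    also have "\<dots> \<le> K * R ^ (Suc n + k) * s ^ Suc n"
      using bound[of "Suc n + k"] s by (intro mult_right_mono) auto
    also have "\<dots> = ?g n" by (simp add: power_add power_mult_distrib mult_ac)
    finally show ?thesis .
  qed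
  have sn: "summable (\<lambda>n. norm (d (Suc n + k) * s ^ Suc n))"
    by (rule summable_comparison_test'[OF sums_summable[OF gs], where N=0]) (metis le abs_abs real_norm_def)
  have "\<bar>d k\<bar> = norm (\<Sum>n. d (Suc n + k) * s ^ Suc n)"
    unfolding sums_unique[OF sm, symmetric] by simp
  also have "\<dots> \<le> (\<Sum>n. norm (d (Suc n + k) * s ^ Suc n))" by (rule summable_norm[OF sn])
  also have "\<dots> \<le> (\<Sum>n. ?g n)" by (rule suminf_le[OF le sn]) (rule sums_summable[OF gs])
  also have "\<dots> = K * R ^ (k + 1) * s * (1 / (1 - R * s))" using gs sums_unique by metis
  also have "\<dots> \<le> K * R ^ (k + 1) * s * 2"
  proof (rule mult_left_mono)
    show "1 / (1 - R * s) \<le> 2" using Rs by (simp add: field_simps)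
    show "0 \<le> K * R ^ (k + 1) * s" using K R s by simp
  qed
  finally show ?thesis by (simp only: mult_ac)
qed


lemma powser_unique_zero:
  fixes d :: "nat \<Rightarrow> real"
  assumes bound: "\<And>n. \<bar>d n\<bar> \<le> K * R ^ n" and R: "R \<ge> 1" and \<delta>: "\<delta> > 0"
    and sm: "\<And>s. 0 < s \<Longrightarrow> s < \<delta> \<Longrightarrow> (\<lambda>n. d n * s ^ n) sums 0"
  shows "d n = 0"
proof (induction n rule: less_induct)
  case (less k)
  have K: "K \<ge> 0" using bound[of 0] by simp
  define \<epsilon> where "\<epsilon> = min (\<delta> / 2) (1 / (2 * R))"
  have \<epsilon>: "0 < \<epsilon>" "\<epsilon> < \<delta>" "\<epsilon> \<le> 1 / (2 * R)" using \<delta> R by (auto simp: \<epsilon>_def)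
  have key: "\<bar>d k\<bar> \<le> 2 * K * R ^ (k + 1) * s" if s: "0 < s" "s \<le> \<epsilon>" for s
  proof (rule coef_small[OF bound R s(1)])
    show "s \<le> 1 / (2 * R)" using s \<epsilon> by simp
    have s0: "(\<lambda>n. d n * s ^ n) sums 0" using sm s \<epsilon> by simp
    have "(\<Sum>i<k. d i * s ^ i) = 0" using less by simp
    then have "(\<lambda>n. d (n + k) * s ^ (n + k)) sums 0"
      using s0 sums_iff_shift[where f="\<lambda>n. d n * s ^ n" and n=k] by simp
    then have "(\<lambda>n. (1 / s ^ k) * (d (n + k) * s ^ (n + k))) sums 0"
      using sums_mult[where c="1 / s ^ k"] by fastforce
    moreover have "(\<lambda>n. (1 / s ^ k) * (d (n + k) * s ^ (n + k))) = (\<lambda>n. d (n + k) * s ^ n)"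
      using s by (auto simp: power_add)
    ultimately have "(\<lambda>n. d (n + k) * s ^ n) sums 0" by simp
    then show "(\<lambda>n. d (Suc n + k) * s ^ Suc n) sums (- d k)"
      using sums_Suc_iff[where f="\<lambda>n. d (n + k) * s ^ n"] by simp
  qed
  show ?case
  proof -
    have "\<bar>d k\<bar> \<le> 0"
    proof (rule field_le_epsilon)
      fix e :: real assume e: "e > 0"
      define C where "C = 2 * K * R ^ (k + 1) + 1"
      have C: "C > 0" using K R by (simp add: C_def add_nonneg_pos)
      define s where "s = min \<epsilon> (e / C)"
      have s: "0 < s" "s \<le> \<epsilon>" using \<epsilon> e C by (auto simp: s_def)
      have "\<bar>d k\<bar> \<le> 2 * K * R ^ (k + 1) * s" by (rule key[OF s])
      also have "\<dots> \<le> C * s" using s by (intro mult_right_mono) (auto simp: C_def)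
      also have "\<dots> \<le> C * (e / C)" using C s by (intro mult_left_mono) (auto simp: s_def)
      also have "\<dots> = e" using C by simp
      finally show "\<bar>d k\<bar> \<le> 0 + e" by simp
    qed
    then show ?thesis by simp
  qed
qed



lemma (in prob_space) integral_decomp:
  fixes f :: "'a \<Rightarrow> real" and Z :: "'a \<Rightarrow> nat"
  assumes f[measurable]: "f \<in> borel_measurable M" and fb: "\<And>\<omega>. \<omega> \<in> space M \<Longrightarrow> \<bar>f \<omega>\<bar> \<le> B"
    and Z[measurable]: "Z \<in> measurable M (count_space UNIV)" and A[measurable]: "A \<in> sets M"
  shows "(\<lambda>n. \<integral>\<omega>. f \<omega> * indicator ({\<omega>\<in>space M. Z \<omega> = n} \<inter> A) \<omega> \<partial>M) sums (\<integral>\<omega>. f \<omega> * indicator A \<omega> \<partial>M)"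
proof -
  define S where "S n = {\<omega>\<in>space M. Z \<omega> = n} \<inter> A" for n
  have S[measurable]: "S n \<in> sets M" for n unfolding S_def by measurable
  obtain \<omega>0 where "\<omega>0 \<in> space M" using not_empty by blast
  then have B: "B \<ge> 0" using fb[of \<omega>0] by linarith
  have bnd: "\<And>\<omega>. \<omega> \<in> space M \<Longrightarrow> norm (f \<omega> * indicator X \<omega>) \<le> B" for X :: "'a set"
    using fb B by (auto simp: indicator_def abs_mult)
  have int: "integrable M (\<lambda>\<omega>. f \<omega> * indicator (S n) \<omega>)" for n
    by (rule integrable_const_bound[where B=B]) (use bnd in \<open>auto intro!: AE_I2\<close>)
  have ptw: "(\<lambda>n. f \<omega> * indicator (S n) \<omega>) sums (f \<omega> * indicator A \<omega>)" if \<omega>: "\<omega> \<in> space M" for \<omega>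
  proof -
    have "(\<lambda>n. f \<omega> * indicator (S n) \<omega>) = (\<lambda>n. if n = Z \<omega> then f \<omega> * indicator A \<omega> else 0)"
      using \<omega> by (auto simp: S_def indicator_def)
    then show ?thesis using sums_single[of "Z \<omega>" "\<lambda>_. f \<omega> * indicator A \<omega>"] by simp
  qed
  have ptwn: "summable (\<lambda>n. norm (f \<omega> * indicator (S n) \<omega>))" if \<omega>: "\<omega> \<in> space M" for \<omega>
  proof -
    have "(\<lambda>n. norm (f \<omega> * indicator (S n) \<omega>)) = (\<lambda>n. if n = Z \<omega> then norm (f \<omega> * indicator A \<omega>) else 0)"
      using \<omega> by (auto simp: S_def indicator_def)
    then show ?thesis using sums_single[of "Z \<omega>" "\<lambda>_. norm (f \<omega> * indicator A \<omega>)"] sums_summable by simp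
  qed
  have disj: "disjoint_family S" by (auto simp: disjoint_family_on_def S_def)
  have sp: "summable (\<lambda>n. prob (S n))"
    using finite_measure_UNION[of S] disj S sums_summable by blast
  have sn: "summable (\<lambda>n. \<integral>\<omega>. norm (f \<omega> * indicator (S n) \<omega>) \<partial>M)"
  proof (rule summable_comparison_test'[where g="\<lambda>n. B * prob (S n)" and N=0])
    show "summable (\<lambda>n. B * prob (S n))" using sp by (rule summable_mult)
    fix n
    have "(\<integral>\<omega>. norm (f \<omega> * indicator (S n) \<omega>) \<partial>M) \<le> (\<integral>\<omega>. B * indicator (S n) \<omega> \<partial>M)"
    proof (rule integral_mono)
      show "integrable M (\<lambda>\<omega>. norm (f \<omega> * indicator (S n) \<omega>))" using int by (rule integrable_norm)
      show "integrable M (\<lambda>\<omega>. B * indicator (S n) \<omega>)"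
        using integrable_real_indicator[OF S[of n]] by (simp add: emeasure_eq_measure)
      fix \<omega> assume "\<omega> \<in> space M" then show "norm (f \<omega> * indicator (S n) \<omega>) \<le> B * indicator (S n) \<omega>"
        using fb by (auto simp: indicator_def)
    qed
    also have "\<dots> = B * prob (S n)" by simp
    finally show "norm (\<integral>\<omega>. norm (f \<omega> * indicator (S n) \<omega>) \<partial>M) \<le> B * prob (S n)" by simp
  qed
  have "(\<lambda>n. \<integral>\<omega>. f \<omega> * indicator (S n) \<omega> \<partial>M) sums (\<integral>\<omega>. (\<Sum>n. f \<omega> * indicator (S n) \<omega>) \<partial>M)"
    by (rule sums_integral[OF int AE_I2[OF ptwn] sn])
  moreover have "(\<integral>\<omega>. (\<Sum>n. f \<omega> * indicator (S n) \<omega>) \<partial>M) = (\<integral>\<omega>. f \<omega> * indicator A \<omega> \<partial>M)"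
    by (rule Bochner_Integration.integral_cong[OF refl]) (use ptw sums_unique in metis)
  ultimately show ?thesis by (simp add: S_def)
qed

definition Bset :: "nat \<Rightarrow> (nat + nat \<times> nat) set" where
  "Bset u = {Inl r | r. r \<le> u} \<union> {Inr (r, i) | r i. 1 \<le> r \<and> r \<le> u \<and> 1 \<le> i}"

fun Ff :: "nat \<Rightarrow> (nat + nat \<times> nat \<Rightarrow> nat) \<Rightarrow> nat" where
  "Ff 0 v = v (Inl 0)"
| "Ff (Suc r) v = (\<Sum>i = 1..Ff r v. v (Inr (Suc r, i))) + v (Inl (Suc r))"

lemma Bset_mono: "r \<le> u \<Longrightarrow> Bset r \<subseteq> Bset u"
  by (auto simp: Bset_def)

lemma Ff_cong: "(\<And>k. k \<in> Bset r \<Longrightarrow> v k = w k) \<Longrightarrow> Ff r v = Ff r w"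
proof (induction r)
  case 0 then show ?case by (simp add: Bset_def)
next
  case (Suc r)
  have "Ff r v = Ff r w" using Suc.IH Suc.prems Bset_mono[of r "Suc r"] by auto
  moreover have "\<And>i. i \<in> {1..Ff r w} \<Longrightarrow> v (Inr (Suc r, i)) = w (Inr (Suc r, i))"
    using Suc.prems by (auto simp: Bset_def)
  moreover have "v (Inl (Suc r)) = w (Inl (Suc r))" using Suc.prems by (auto simp: Bset_def)
  ultimately show ?case by simp
qed

lemma meas_nat_add:
  fixes f g :: "'b \<Rightarrow> nat"
  assumes f: "f \<in> measurable N (count_space UNIV)" and g: "g \<in> measurable N (count_space UNIV)"
  shows "(\<lambda>x. f x + g x) \<in> measurable N (count_space UNIV)"
proof -
  have "\<And>a::nat. (\<lambda>x. a + g x) \<in> measurable N (count_space UNIV)"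
  proof -
    fix a :: nat
    show "(\<lambda>x. a + g x) \<in> measurable N (count_space UNIV)"
      using measurable_compose_countable[where f="\<lambda>b x. a + b" and g=g, OF measurable_count_space_const g] .
  qed
  then show ?thesis using measurable_compose_countable[where f="\<lambda>a x. a + g x" and g=f, OF _ f] by blast
qed

lemma Ff_meas: "r \<le> u \<Longrightarrow> Ff r \<in> measurable (Pi\<^sub>M (Bset u) (\<lambda>_. count_space UNIV)) (count_space UNIV)"
proof (induction r)
  case 0
  have "Inl 0 \<in> Bset u" by (auto simp: Bset_def)
  then show ?case using measurable_component_singleton[of "Inl 0" "Bset u" "\<lambda>_. count_space UNIV"]
    by (simp add: measurable_ident_sets)
next
  case (Suc r)
  let ?N = "Pi\<^sub>M (Bset u) (\<lambda>_. count_space UNIV :: nat measure)"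
  have comp: "(\<lambda>v. v k) \<in> measurable ?N (count_space UNIV)" if "k \<in> Bset u" for k
    using measurable_component_singleton[OF that, of "\<lambda>_. count_space UNIV"] .
  have sumi: "(\<lambda>v. \<Sum>i = 1..n. v (Inr (Suc r, i))) \<in> measurable ?N (count_space UNIV)" for n
  proof (induction n)
    case 0 then show ?case by (simp add: measurable_count_space_const)
  next
    case (Suc n)
    have "Inr (Suc r, Suc n) \<in> Bset u" using Suc.prems \<open>Suc r \<le> u\<close> by (auto simp: Bset_def)
    then show ?case using meas_nat_add[OF Suc.IH comp] by simp
  qed
  have l: "Inl (Suc r) \<in> Bset u" using \<open>Suc r \<le> u\<close> by (auto simp: Bset_def)
  have "(\<lambda>v. (\<lambda>n v. (\<Sum>i = 1..n. v (Inr (Suc r, i))) + v (Inl (Suc r))) (Ff r v) v) \<in> measurable ?N (count_space UNIV)"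
    by (rule measurable_compose_countable[OF meas_nat_add[OF sumi comp[OF l]]]) (use Suc in simp)
  then show ?case by simp
qed

locale ginar = prob_space M for M :: "'a measure" +
  fixes X E :: "nat \<Rightarrow> 'a \<Rightarrow> nat" and G :: "nat \<Rightarrow> nat \<Rightarrow> 'a \<Rightarrow> nat" and \<mu> \<alpha> :: real
  assumes mu_pos: "\<mu> > 0"
    and alpha_pos: "\<alpha> > 0" and alpha_bound: "\<alpha> < \<mu> / (1 + \<mu>)"
    and indep: "indep_vars (\<lambda>_. count_space UNIV)
         (\<lambda>k. case k of Inl t \<Rightarrow> (if t = 0 then X 0 else E t) | Inr (t, i) \<Rightarrow> G t i)
         ({Inl t | t. True} \<union> {Inr (t, i) | t i. t \<ge> 1 \<and> i \<ge> 1})"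
    and E_dist: "\<And>t k. t \<ge> 1 \<Longrightarrow>
         measure M {\<omega> \<in> space M. E t \<omega> = k} = geo_p ((1 - \<alpha>) * \<mu>) k"
    and G_dist: "\<And>t i k. t \<ge> 1 \<Longrightarrow> i \<ge> 1 \<Longrightarrow>
         measure M {\<omega> \<in> space M. G t i \<omega> = k}
           = zmg_p (1 - \<alpha> / ((1 - \<alpha>) * \<mu>)) ((1 - \<alpha>) * \<mu>) k"
    and recursion: "\<And>t \<omega>. t \<ge> 1 \<Longrightarrow> \<omega> \<in> space M \<Longrightarrow>
         X t \<omega> = (\<Sum>i = 1..X (t - 1) \<omega>. G t i \<omega>) + E t \<omega>"
    and X_dist: "\<And>t k. measure M {\<omega> \<in> space M. X t \<omega> = k} = geo_p \<mu> k"
begin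

definition Y :: "nat + nat \<times> nat \<Rightarrow> 'a \<Rightarrow> nat" where
  "Y = (\<lambda>k. case k of Inl t \<Rightarrow> (if t = 0 then X 0 else E t) | Inr (t, i) \<Rightarrow> G t i)"

definition Iset :: "(nat + nat \<times> nat) set" where
  "Iset = {Inl t | t. True} \<union> {Inr (t, i) | t i. t \<ge> 1 \<and> i \<ge> 1}"

lemma indepY: "indep_vars (\<lambda>_. count_space UNIV) Y Iset"
  using indep unfolding Y_def Iset_def .

lemma Y_meas: "k \<in> Iset \<Longrightarrow> Y k \<in> measurable M (count_space UNIV)"
  using indepY unfolding indep_vars_def by blast

lemma Bset_sub: "Bset u \<subseteq> Iset"
  by (auto simp: Bset_def Iset_def)

lemma X_Ff: "\<omega> \<in> space M \<Longrightarrow> X r \<omega> = Ff r (\<lambda>k. Y k \<omega>)"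
proof (induction r)
  case 0 then show ?case by (simp add: Y_def)
next
  case (Suc r)
  then show ?case using recursion[of "Suc r" \<omega>] by (simp add: Y_def)
qed

lemma X_Ff_restr: "r \<le> u \<Longrightarrow> \<omega> \<in> space M \<Longrightarrow> X r \<omega> = Ff r (restrict (\<lambda>k. Y k \<omega>) (Bset u))"
  using X_Ff[of \<omega> r] Bset_mono[of r u] by (auto intro!: Ff_cong)

lemma restr_meas: "(\<lambda>\<omega>. restrict (\<lambda>k. Y k \<omega>) (Bset u)) \<in> measurable M (Pi\<^sub>M (Bset u) (\<lambda>_. count_space UNIV))"
  using Bset_sub Y_meas by (intro measurable_restrict) auto

lemma X_meas[measurable]: "X r \<in> measurable M (count_space UNIV)"
proof -
  have "(\<lambda>\<omega>. Ff r (restrict (\<lambda>k. Y k \<omega>) (Bset r))) \<in> measurable M (count_space UNIV)"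
    using measurable_comp[OF restr_meas Ff_meas[of r r]] by (simp add: comp_def)
  then show ?thesis by (rule measurable_cong[THEN iffD1, rotated]) (simp add: X_Ff_restr[of r r])
qed

lemma alpha_lt1: "\<alpha> < 1"
proof -
  have "\<mu> / (1 + \<mu>) < 1" using mu_pos by simp
  then show ?thesis using alpha_bound by linarith
qed

definition m1 :: real where "m1 = (1 - \<alpha>) * \<mu>"

lemma m1_pos: "m1 > 0" using alpha_lt1 mu_pos by (simp add: m1_def)

definition phi :: "real \<Rightarrow> real" where "phi s = 1 - \<alpha> * (1 - s) / (1 + m1 * (1 - s))"
definition psi :: "real \<Rightarrow> real" where "psi s = 1 / (1 + m1 * (1 - s))"

lemma E_meas[measurable]: "t \<ge> 1 \<Longrightarrow> E t \<in> measurable M (count_space UNIV)"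
  using Y_meas[of "Inl t"] by (simp add: Y_def Iset_def)

lemma G_meas[measurable]: "t \<ge> 1 \<Longrightarrow> i \<ge> 1 \<Longrightarrow> G t i \<in> measurable M (count_space UNIV)"
  using Y_meas[of "Inr (t, i)"] by (simp add: Y_def Iset_def)

lemma int_on_level:
  fixes Z :: "'a \<Rightarrow> nat" and g :: "nat \<Rightarrow> real"
  assumes [measurable]: "Z \<in> measurable M (count_space UNIV)" "A \<in> sets M"
  shows "(\<integral>\<omega>. g (Z \<omega>) * indicator ({\<omega>\<in>space M. Z \<omega> = n} \<inter> A) \<omega> \<partial>M) = g n * prob ({\<omega>\<in>space M. Z \<omega> = n} \<inter> A)"
proof -
  have "(\<integral>\<omega>. g (Z \<omega>) * indicator ({\<omega>\<in>space M. Z \<omega> = n} \<inter> A) \<omega> \<partial>M)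
      = (\<integral>\<omega>. g n * indicator ({\<omega>\<in>space M. Z \<omega> = n} \<inter> A) \<omega> \<partial>M)"
    by (rule Bochner_Integration.integral_cong[OF refl]) (auto simp: indicator_def)
  also have "\<dots> = g n * prob ({\<omega>\<in>space M. Z \<omega> = n} \<inter> A)"
    by simp
  finally show ?thesis .
qed

lemma pgf_decomp:
  fixes Z :: "'a \<Rightarrow> nat" and s :: real
  assumes [measurable]: "Z \<in> measurable M (count_space UNIV)" "A \<in> sets M" and s: "0 \<le> s" "s \<le> 1"
  shows "(\<lambda>n. s ^ n * prob ({\<omega>\<in>space M. Z \<omega> = n} \<inter> A)) sums (\<integral>\<omega>. s ^ (Z \<omega>) * indicator A \<omega> \<partial>M)"
proof -
  have "(\<lambda>n. \<integral>\<omega>. s ^ (Z \<omega>) * indicator ({\<omega>\<in>space M. Z \<omega> = n} \<inter> A) \<omega> \<partial>M) sums (\<integral>\<omega>. s ^ (Z \<omega>) * indicator A \<omega> \<partial>M)"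
    by (rule integral_decomp[where B=1]) (use s in \<open>auto intro: power_le_one\<close>)
  then show ?thesis using int_on_level[where g="\<lambda>n. s ^ n", of Z A] by simp
qed

lemma pgf_E:
  assumes "t \<ge> 1" "0 \<le> s" "s < 1"
  shows "(\<integral>\<omega>. s ^ (E t \<omega>) \<partial>M) = psi s"
proof -
  have "(\<lambda>n. s ^ n * prob ({\<omega>\<in>space M. E t \<omega> = n} \<inter> space M)) sums (\<integral>\<omega>. s ^ (E t \<omega>) * indicator (space M) \<omega> \<partial>M)"
    using assms by (intro pgf_decomp) auto
  moreover have "(\<lambda>n. s ^ n * prob ({\<omega>\<in>space M. E t \<omega> = n} \<inter> space M)) = (\<lambda>n. fps_nth (Psif m1) n * s ^ n)"
    using E_dist[OF assms(1)] by (auto simp: Psif_def m1_def Int_absorb2 mult.commute)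
  moreover have "(\<integral>\<omega>. s ^ (E t \<omega>) * indicator (space M) \<omega> \<partial>M) = (\<integral>\<omega>. s ^ (E t \<omega>) \<partial>M)"
    by (rule Bochner_Integration.integral_cong[OF refl]) auto
  ultimately have "(\<lambda>n. fps_nth (Psif m1) n * s ^ n) sums (\<integral>\<omega>. s ^ (E t \<omega>) \<partial>M)" by simp
  moreover have "(\<lambda>n. fps_nth (Psif m1) n * s ^ n) sums psi s"
    using Psif_sums[OF m1_pos assms(2,3)] by (simp add: psi_def)
  ultimately show ?thesis using sums_unique2 by blast
qed

lemma pgf_G:
  assumes "t \<ge> 1" "i \<ge> 1" "0 \<le> s" "s < 1"
  shows "(\<integral>\<omega>. s ^ (G t i \<omega>) \<partial>M) = phi s"
proof -
  define \<pi> where "\<pi> = 1 - \<alpha> / m1"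
  have "(\<lambda>n. s ^ n * prob ({\<omega>\<in>space M. G t i \<omega> = n} \<inter> space M)) sums (\<integral>\<omega>. s ^ (G t i \<omega>) * indicator (space M) \<omega> \<partial>M)"
    using assms by (intro pgf_decomp) auto
  moreover have "(\<lambda>n. s ^ n * prob ({\<omega>\<in>space M. G t i \<omega> = n} \<inter> space M))
     = (\<lambda>n. (if n = 0 then \<pi> else 0) + (1 - \<pi>) * (fps_nth (Psif m1) n * s ^ n))"
    using G_dist[OF assms(1,2)] by (auto simp: Psif_def m1_def \<pi>_def Int_absorb2 zmg_p_def geo_p_def algebra_simps)
  moreover have "(\<integral>\<omega>. s ^ (G t i \<omega>) * indicator (space M) \<omega> \<partial>M) = (\<integral>\<omega>. s ^ (G t i \<omega>) \<partial>M)"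
    by (rule Bochner_Integration.integral_cong[OF refl]) auto
  ultimately have A: "(\<lambda>n. (if n = 0 then \<pi> else 0) + (1 - \<pi>) * (fps_nth (Psif m1) n * s ^ n)) sums (\<integral>\<omega>. s ^ (G t i \<omega>) \<partial>M)" by simp
  have "(\<lambda>n. (if n = 0 then \<pi> else 0) + (1 - \<pi>) * (fps_nth (Psif m1) n * s ^ n)) sums (\<pi> + (1 - \<pi>) * psi s)"
    using Psif_sums[OF m1_pos assms(3,4)] sums_single[of 0 "\<lambda>_. \<pi>"]
    by (intro sums_add sums_mult) (auto simp: psi_def)
  then have B: "(\<integral>\<omega>. s ^ (G t i \<omega>) \<partial>M) = \<pi> + (1 - \<pi>) * psi s"
    using A sums_unique2 by blast
  have d: "1 + m1 * (1 - s) > 0" using m1_pos assms by (simp add: add_pos_nonneg)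
  have "\<pi> + (1 - \<pi>) * psi s = 1 - (\<alpha> / m1) * (1 - 1 / (1 + m1 * (1 - s)))"
    by (simp add: \<pi>_def psi_def algebra_simps)
  also have "1 - 1 / (1 + m1 * (1 - s)) = m1 * (1 - s) / (1 + m1 * (1 - s))"
    using d by (simp add: field_simps)
  also have "1 - (\<alpha> / m1) * (m1 * (1 - s) / (1 + m1 * (1 - s))) = phi s"
    using m1_pos by (simp add: phi_def)
  finally show ?thesis using B by simp
qed

lemma step_int:
  fixes n i :: nat
  assumes tu: "t \<le> u" and s: "0 \<le> s" "s < 1"
  defines "A \<equiv> {\<omega>\<in>space M. X u \<omega> = n} \<inter> {\<omega>\<in>space M. X t \<omega> = i}"
  shows "(\<integral>\<omega>. s ^ (X (Suc u) \<omega>) * indicator A \<omega> \<partial>M) = prob A * phi s ^ n * psi s"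
proof -
  have A[measurable]: "A \<in> sets M" unfolding A_def by measurable
  define J where "J = insert (Inl (Suc u)) ((\<lambda>k. Inr (Suc u, k)) ` {1..n})"
  define L where "L = insert None (Some ` J)"
  define K where "K j = (case j of None \<Rightarrow> Bset u | Some k \<Rightarrow> {k})" for j
  have finJ: "finite J" and finL: "finite L" by (auto simp: J_def L_def)
  have JI: "J \<subseteq> Iset" by (auto simp: J_def Iset_def)
  have JB: "J \<inter> Bset u = {}" by (auto simp: J_def Bset_def)
  have KI: "K j \<subseteq> Iset" if "j \<in> L" for j
    using that JI Bset_sub[of u] by (auto simp: L_def K_def)
  have disj: "disjoint_family_on K L"
    using JB by (auto simp: disjoint_family_on_def L_def K_def split: option.splits)
  have ind1: "indep_vars (\<lambda>j. Pi\<^sub>M (K j) (\<lambda>_. count_space UNIV)) (\<lambda>j \<omega>. restrict (\<lambda>k. Y k \<omega>) (K j)) L"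
    by (rule indep_vars_restrict[OF indepY KI disj])
  define h where "h j v = (case j of None \<Rightarrow> indicator {n} (Ff u v) * indicator {i} (Ff t v)
                                   | Some k \<Rightarrow> s ^ (v k))" for j and v :: "nat + nat \<times> nat \<Rightarrow> nat"
  have hm: "h j \<in> borel_measurable (Pi\<^sub>M (K j) (\<lambda>_. count_space UNIV))" if "j \<in> L" for j
  proof (cases j)
    case None
    have m1': "(\<lambda>v. indicator {n} (Ff u v) :: real) \<in> borel_measurable (Pi\<^sub>M (Bset u) (\<lambda>_. count_space UNIV))"
      using measurable_comp[OF Ff_meas[of u u], of "indicator {n}" borel] by (simp add: comp_def measurable_count_space_eq1)
    have m2': "(\<lambda>v. indicator {i} (Ff t v) :: real) \<in> borel_measurable (Pi\<^sub>M (Bset u) (\<lambda>_. count_space UNIV))"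
      using measurable_comp[OF Ff_meas[OF tu], of "indicator {i}" borel] by (simp add: comp_def measurable_count_space_eq1)
    show ?thesis using None borel_measurable_times[OF m1' m2'] by (simp add: h_def[abs_def] K_def)
  next
    case (Some k)
    have "(\<lambda>v. v k) \<in> measurable (Pi\<^sub>M {k} (\<lambda>_. count_space UNIV)) (count_space UNIV)"
      using measurable_component_singleton[of k "{k}" "\<lambda>_. count_space UNIV"] by simp
    then have "(\<lambda>v. s ^ (v k)) \<in> borel_measurable (Pi\<^sub>M {k} (\<lambda>_. count_space UNIV))"
      using measurable_comp[of "\<lambda>v. v k" _ "count_space UNIV" "\<lambda>c. s ^ c" borel]
      by (simp add: comp_def measurable_count_space_eq1)
    then show ?thesis using Some by (simp add: h_def[abs_def] K_def)
  qed
  define Z where "Z j \<omega> = h j (restrict (\<lambda>k. Y k \<omega>) (K j))" for j \<omega>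
  have ind2: "indep_vars (\<lambda>_. borel) Z L"
    unfolding Z_def by (rule indep_vars_compose2[OF ind1 hm])
  have Zm: "Z j \<in> borel_measurable M" if "j \<in> L" for j
    using ind2 that unfolding indep_vars_def by blast
  have Zb: "\<bar>Z j \<omega>\<bar> \<le> 1" for j \<omega>
    using s by (auto simp: Z_def h_def indicator_def power_le_one split: option.splits)
  have Zint: "integrable M (Z j)" if "j \<in> L" for j
    by (rule integrable_const_bound[where B=1]) (use Zb Zm that in auto)
  have eq1: "(\<integral>\<omega>. (\<Prod>j\<in>L. Z j \<omega>) \<partial>M) = (\<Prod>j\<in>L. \<integral>\<omega>. Z j \<omega> \<partial>M)"
    by (rule indep_vars_lebesgue_integral[OF finL ind2 Zint])
  have ZN: "Z None \<omega> = indicator A \<omega>" if "\<omega> \<in> space M" for \<omega>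
    using that X_Ff_restr[OF tu that] X_Ff_restr[of u u \<omega>]
    by (auto simp: Z_def h_def K_def A_def indicator_def)
  have ZS: "Z (Some k) \<omega> = s ^ (Y k \<omega>)" for k \<omega>
    by (simp add: Z_def h_def K_def)
  have ZS': "Z (Some k) = (\<lambda>\<omega>. s ^ (Y k \<omega>))" for k
    by (simp add: fun_eq_iff ZS)
  have prodJ: "(\<Prod>k\<in>J. s ^ (Y k \<omega>)) = s ^ (E (Suc u) \<omega> + (\<Sum>k = 1..n. G (Suc u) k \<omega>))" for \<omega>
  proof -
    have "(\<Prod>k\<in>J. s ^ (Y k \<omega>)) = s ^ (Y (Inl (Suc u)) \<omega>) * (\<Prod>k\<in>{1..n}. s ^ (Y (Inr (Suc u, k)) \<omega>))"
      unfolding J_def by (subst prod.insert) (auto simp: prod.reindex inj_on_def)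
    also have "\<dots> = s ^ (E (Suc u) \<omega>) * (\<Prod>k\<in>{1..n}. s ^ (G (Suc u) k \<omega>))"
      by (simp add: Y_def)
    also have "\<dots> = s ^ (E (Suc u) \<omega> + (\<Sum>k = 1..n. G (Suc u) k \<omega>))"
      by (simp add: power_add power_sum)
    finally show ?thesis .
  qed
  have lhs: "(\<Prod>j\<in>L. Z j \<omega>) = s ^ (X (Suc u) \<omega>) * indicator A \<omega>" if \<omega>: "\<omega> \<in> space M" for \<omega>
  proof -
    have "(\<Prod>j\<in>L. Z j \<omega>) = Z None \<omega> * (\<Prod>k\<in>J. Z (Some k) \<omega>)"
      unfolding L_def using finJ by (subst prod.insert) (auto simp: prod.reindex)
    also have "\<dots> = indicator A \<omega> * s ^ (E (Suc u) \<omega> + (\<Sum>k = 1..n. G (Suc u) k \<omega>))"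
      by (simp add: ZN[OF \<omega>] ZS prodJ)
    also have "\<dots> = s ^ (X (Suc u) \<omega>) * indicator A \<omega>"
      using recursion[of "Suc u" \<omega>] \<omega> by (auto simp: indicator_def A_def add.commute)
    finally show ?thesis .
  qed
  have rhs: "(\<Prod>j\<in>L. \<integral>\<omega>. Z j \<omega> \<partial>M) = prob A * phi s ^ n * psi s"
  proof -
    have "(\<Prod>j\<in>L. \<integral>\<omega>. Z j \<omega> \<partial>M) = (\<integral>\<omega>. Z None \<omega> \<partial>M) * (\<Prod>k\<in>J. \<integral>\<omega>. Z (Some k) \<omega> \<partial>M)"
      unfolding L_def using finJ by (subst prod.insert) (auto simp: prod.reindex)
    also have "(\<integral>\<omega>. Z None \<omega> \<partial>M) = prob A"
    proof -
      have "(\<integral>\<omega>. Z None \<omega> \<partial>M) = (\<integral>\<omega>. indicator A \<omega> \<partial>M)"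
        by (rule Bochner_Integration.integral_cong[OF refl]) (simp add: ZN)
      then show ?thesis by simp
    qed
    also have "(\<Prod>k\<in>J. \<integral>\<omega>. Z (Some k) \<omega> \<partial>M) = psi s * phi s ^ n"
    proof -
      have "(\<Prod>k\<in>J. \<integral>\<omega>. Z (Some k) \<omega> \<partial>M) = (\<integral>\<omega>. s ^ (E (Suc u) \<omega>) \<partial>M) * (\<Prod>k\<in>{1..n}. \<integral>\<omega>. s ^ (G (Suc u) k \<omega>) \<partial>M)"
        unfolding J_def by (subst prod.insert) (auto simp: prod.reindex inj_on_def ZS' Y_def)
      also have "\<dots> = psi s * phi s ^ n"
        using pgf_E[of "Suc u" s] pgf_G[of "Suc u" _ s] s by simp
      finally show ?thesis .
    qed
    finally show ?thesis by simp
  qed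
  have "(\<integral>\<omega>. s ^ (X (Suc u) \<omega>) * indicator A \<omega> \<partial>M) = (\<integral>\<omega>. (\<Prod>j\<in>L. Z j \<omega>) \<partial>M)"
    by (rule Bochner_Integration.integral_cong[OF refl]) (simp add: lhs)
  then show ?thesis using eq1 rhs by simp
qed

definition Phih :: "nat \<Rightarrow> real \<Rightarrow> real" where
  "Phih h s = 1 - \<alpha> ^ h * (1 - s) / (1 + (1 - \<alpha> ^ h) * \<mu> * (1 - s))"
definition Psih :: "nat \<Rightarrow> real \<Rightarrow> real" where
  "Psih h s = 1 / (1 + (1 - \<alpha> ^ h) * \<mu> * (1 - s))"

lemma phi_range: "0 \<le> s \<Longrightarrow> s < 1 \<Longrightarrow> 0 \<le> phi s \<and> phi s < 1"
proof -
  assume s: "0 \<le> s" "s < 1"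
  have d: "1 + m1 * (1 - s) \<ge> 1" using m1_pos s by simp
  have "\<alpha> * (1 - s) / (1 + m1 * (1 - s)) \<le> \<alpha> * (1 - s)"
  proof -
    have "\<alpha> * (1 - s) * 1 \<le> \<alpha> * (1 - s) * (1 + m1 * (1 - s))"
      using d alpha_pos s by (intro mult_left_mono) auto
    then show ?thesis using d by (simp add: divide_le_eq)
  qed
  moreover have "\<alpha> * (1 - s) \<le> 1" using alpha_lt1 alpha_pos s by (simp add: mult_le_one)
  moreover have "\<alpha> * (1 - s) / (1 + m1 * (1 - s)) > 0" using alpha_pos s d by simp
  ultimately show ?thesis by (simp add: phi_def)
qed

lemma Phih_Psih_step:
  assumes s: "0 \<le> s" "s < 1"
  shows "Phih h (phi s) = Phih (Suc h) s" "Psih h (phi s) * psi s = Psih (Suc h) s"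
proof -
  let ?u = "1 - s" and ?a = "\<alpha> ^ h"
  define me where "me = (1 - ?a) * \<mu>"
  define me' where "me' = (1 - \<alpha> ^ Suc h) * \<mu>"
  define u' where "u' = \<alpha> * ?u / (1 + m1 * ?u)"
  have d1: "1 + m1 * ?u > 0" using m1_pos s by (simp add: add_pos_nonneg)
  have u'd: "u' * (1 + m1 * ?u) = \<alpha> * ?u" using d1 by (simp add: u'_def)
  have ph: "1 - phi s = u'" by (simp add: phi_def u'_def)
  have key: "(1 + me * u') * (1 + m1 * ?u) = 1 + me' * ?u"
  proof -
    have "(1 + me * u') * (1 + m1 * ?u) = 1 + m1 * ?u + me * (u' * (1 + m1 * ?u))" by (simp add: algebra_simps)
    also have "\<dots> = 1 + m1 * ?u + me * (\<alpha> * ?u)" by (simp add: u'd)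
    also have "\<dots> = 1 + me' * ?u" by (simp add: me_def me'_def m1_def algebra_simps)
    finally show ?thesis .
  qed
  have me_nn: "me \<ge> 0" using alpha_pos alpha_lt1 mu_pos by (simp add: me_def power_le_one)
  have u'_nn: "u' \<ge> 0" using d1 alpha_pos s by (simp add: u'_def)
  have d2: "1 + me * u' > 0" using me_nn u'_nn by (simp add: add_pos_nonneg)
  have d3: "1 + me' * ?u > 0" unfolding key[symmetric] using d2 d1 by (rule mult_pos_pos)
  have "Phih h (phi s) = 1 - ?a * u' / (1 + me * u')" by (simp add: Phih_def ph me_def)
  also have "?a * u' / (1 + me * u') = ?a * (u' * (1 + m1 * ?u)) / ((1 + me * u') * (1 + m1 * ?u))"
    using d1 by simp
  also have "\<dots> = \<alpha> ^ Suc h * ?u / (1 + me' * ?u)" unfolding key u'd by (simp add: mult_ac)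
  finally show "Phih h (phi s) = Phih (Suc h) s" by (simp add: Phih_def me'_def)
  have "Psih h (phi s) * psi s = 1 / ((1 + me * u') * (1 + m1 * ?u))"
    by (simp add: Psih_def ph me_def psi_def)
  also have "\<dots> = Psih (Suc h) s" unfolding key by (simp add: Psih_def me'_def)
  finally show "Psih h (phi s) * psi s = Psih (Suc h) s" .
qed

lemma pgf_h:
  fixes i :: nat
  assumes "0 \<le> s" "s < 1"
  shows "(\<integral>\<omega>. s ^ (X (t + h) \<omega>) * indicator {\<omega>\<in>space M. X t \<omega> = i} \<omega> \<partial>M)
       = prob {\<omega>\<in>space M. X t \<omega> = i} * Phih h s ^ i * Psih h s"
  using assms
proof (induction h arbitrary: s)
  case 0
  have "(\<integral>\<omega>. s ^ (X (t + 0) \<omega>) * indicator {\<omega>\<in>space M. X t \<omega> = i} \<omega> \<partial>M)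
      = (\<integral>\<omega>. s ^ i * indicator {\<omega>\<in>space M. X t \<omega> = i} \<omega> \<partial>M)"
    by (rule Bochner_Integration.integral_cong[OF refl]) (auto simp: indicator_def)
  also have "\<dots> = s ^ i * prob {\<omega>\<in>space M. X t \<omega> = i}"
    by (simp add: Int_absorb2)
  finally show ?case by (simp add: Phih_def Psih_def mult.commute)
next
  case (Suc h)
  let ?A = "{\<omega>\<in>space M. X t \<omega> = i}" and ?u = "t + h"
  have A[measurable]: "?A \<in> sets M" by measurable
  have s1: "(\<lambda>n. \<integral>\<omega>. s ^ (X (Suc ?u) \<omega>) * indicator ({\<omega>\<in>space M. X ?u \<omega> = n} \<inter> ?A) \<omega> \<partial>M)
      sums (\<integral>\<omega>. s ^ (X (Suc ?u) \<omega>) * indicator ?A \<omega> \<partial>M)"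
    by (rule integral_decomp[where B=1]) (use Suc.prems in \<open>auto intro: power_le_one\<close>)
  have eqn: "(\<integral>\<omega>. s ^ (X (Suc ?u) \<omega>) * indicator ({\<omega>\<in>space M. X ?u \<omega> = n} \<inter> ?A) \<omega> \<partial>M)
      = phi s ^ n * prob ({\<omega>\<in>space M. X ?u \<omega> = n} \<inter> ?A) * psi s" for n
    using step_int[of t ?u s n i] Suc.prems by simp
  have ph: "0 \<le> phi s" "phi s < 1" using phi_range Suc.prems by auto
  have s2: "(\<lambda>n. phi s ^ n * prob ({\<omega>\<in>space M. X ?u \<omega> = n} \<inter> ?A)) sums (\<integral>\<omega>. phi s ^ (X ?u \<omega>) * indicator ?A \<omega> \<partial>M)"
    by (rule pgf_decomp) (use ph in auto)
  have "(\<lambda>n. phi s ^ n * prob ({\<omega>\<in>space M. X ?u \<omega> = n} \<inter> ?A) * psi s) sums ((\<integral>\<omega>. phi s ^ (X ?u \<omega>) * indicator ?A \<omega> \<partial>M) * psi s)"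
    by (rule sums_mult2[OF s2])
  then have "(\<integral>\<omega>. s ^ (X (Suc ?u) \<omega>) * indicator ?A \<omega> \<partial>M) = (\<integral>\<omega>. phi s ^ (X ?u \<omega>) * indicator ?A \<omega> \<partial>M) * psi s"
    using s1 eqn sums_unique2 by simp
  also have "\<dots> = prob ?A * Phih h (phi s) ^ i * Psih h (phi s) * psi s"
    using Suc.IH[OF ph] by simp
  also have "\<dots> = prob ?A * Phih (Suc h) s ^ i * Psih (Suc h) s"
    using Phih_Psih_step[OF Suc.prems] by (simp add: mult.assoc)
  finally show ?case by simp
qed

lemma final_prob:
  fixes i j :: nat
  assumes h: "h \<ge> 1"
  defines "a \<equiv> \<alpha> ^ h"
  defines "me \<equiv> (1 - a) * \<mu>"
  shows "prob ({\<omega>\<in>space M. X (t + h) \<omega> = j} \<inter> {\<omega>\<in>space M. X t \<omega> = i})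
       = prob {\<omega>\<in>space M. X t \<omega> = i} * fps_nth (Psif me * Phif me a ^ i) j"
proof -
  let ?A = "{\<omega>\<in>space M. X t \<omega> = i}"
  let ?c = "prob ?A"
  let ?D = "\<lambda>j. fps_nth (Psif me * Phif me a ^ i) j"
  have a0: "0 \<le> a" and a1: "a < 1"
  proof -
    show "0 \<le> a" using alpha_pos by (simp add: a_def)
    have "\<alpha> ^ h \<le> \<alpha>" using power_decreasing[of 1 h \<alpha>] h alpha_pos alpha_lt1 by simp
    then show "a < 1" using alpha_lt1 by (simp add: a_def)
  qed
  have me: "me > 0" using a1 mu_pos by (simp add: me_def)
  define d where "d j = prob ({\<omega>\<in>space M. X (t + h) \<omega> = j} \<inter> ?A) - ?c * ?D j" for j
  have A[measurable]: "?A \<in> sets M" by measurable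
  have sm: "(\<lambda>j. d j * s ^ j) sums 0" if s: "0 < s" "s < 1" for s
  proof -
    have s1: "(\<lambda>j. s ^ j * prob ({\<omega>\<in>space M. X (t + h) \<omega> = j} \<inter> ?A)) sums (?c * Phih h s ^ i * Psih h s)"
      using pgf_decomp[of "X (t + h)" ?A s] pgf_h[of s t h i] s by simp
    have s2: "(\<lambda>j. ?D j * s ^ j) sums (Psih h s * Phih h s ^ i)"
      using D_sums[OF me a0 a1, of s i] s by (simp add: Phih_def Psih_def me_def a_def mult.assoc)
    have "(\<lambda>j. s ^ j * prob ({\<omega>\<in>space M. X (t + h) \<omega> = j} \<inter> ?A) - ?c * (?D j * s ^ j))
        sums (?c * Phih h s ^ i * Psih h s - ?c * (Psih h s * Phih h s ^ i))"
      by (intro sums_diff s1 sums_mult s2)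
    then show ?thesis by (simp add: d_def algebra_simps)
  qed
  define T where "T = Psih h (1/2) * Phih h (1/2) ^ i"
  have s2h: "(\<lambda>j. ?D j * (1/2) ^ j) sums T"
    using D_sums[OF me a0 a1, of "1/2" i] by (simp add: Phih_def Psih_def me_def a_def T_def mult.assoc)
  have Dnn: "?D j \<ge> 0" for j
    by (rule fps_nonneg_mult[OF Psif_nonneg[OF me] fps_nonneg_pow[OF Phif_nonneg[OF me a0 a1]]])
  have Dle: "?D j \<le> T * 2 ^ j" for j
  proof -
    have "?D j * (1/2) ^ j \<le> T"
    proof -
      have "sum (\<lambda>j. ?D j * (1/2) ^ j) {j} \<le> suminf (\<lambda>j. ?D j * (1/2) ^ j)"
        by (rule sum_le_suminf[OF sums_summable[OF s2h]]) (use Dnn in auto)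
      then show ?thesis using sums_unique[OF s2h] by simp
    qed
    then show ?thesis by (simp add: field_simps)
  qed
  have c0: "?c \<ge> 0" by simp
  have T0: "T \<ge> 0" using Dle[of 0] Dnn[of 0] by simp
  have bound: "\<bar>d j\<bar> \<le> (1 + ?c * T) * 2 ^ j" for j
  proof -
    have p1: "prob ({\<omega>\<in>space M. X (t + h) \<omega> = j} \<inter> ?A) \<le> 1" by simp
    have "\<bar>d j\<bar> \<le> prob ({\<omega>\<in>space M. X (t + h) \<omega> = j} \<inter> ?A) + ?c * ?D j"
      unfolding d_def using Dnn[of j] c0 by (simp add: abs_le_iff)
    also have "\<dots> \<le> 1 * 2 ^ j + ?c * (T * 2 ^ j)"
    proof (rule add_mono)
      show "prob ({\<omega>\<in>space M. X (t + h) \<omega> = j} \<inter> ?A) \<le> 1 * 2 ^ j"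
        using p1 one_le_power[of "2::real" j] by linarith
      show "?c * ?D j \<le> ?c * (T * 2 ^ j)" using Dle[of j] c0 by (rule mult_left_mono)
    qed
    finally show ?thesis by (simp add: algebra_simps)
  qed
  have "d j = 0" by (rule powser_unique_zero[OF bound _ _ sm]) auto
  then show ?thesis by (simp add: d_def)
qed

end

theorem proposition7:
  fixes M :: "'a measure"
    and X :: "nat \<Rightarrow> 'a \<Rightarrow> nat"
    and E :: "nat \<Rightarrow> 'a \<Rightarrow> nat"
    and G :: "nat \<Rightarrow> nat \<Rightarrow> 'a \<Rightarrow> nat"
    and \<mu> \<alpha> :: real
  assumes "prob_space M"
    and mu_pos: "\<mu> > 0"
    and alpha_pos: "\<alpha> > 0" and alpha_bound: "\<alpha> < \<mu> / (1 + \<mu>)"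
    and indep: "prob_space.indep_vars M (\<lambda>_. count_space UNIV)
         (\<lambda>k. case k of Inl t \<Rightarrow> (if t = 0 then X 0 else E t) | Inr (t, i) \<Rightarrow> G t i)
         ({Inl t | t. True} \<union> {Inr (t, i) | t i. t \<ge> 1 \<and> i \<ge> 1})"
    and E_dist: "\<And>t k. t \<ge> 1 \<Longrightarrow>
         measure M {\<omega> \<in> space M. E t \<omega> = k} = geo_p ((1 - \<alpha>) * \<mu>) k"
    and G_dist: "\<And>t i k. t \<ge> 1 \<Longrightarrow> i \<ge> 1 \<Longrightarrow>
         measure M {\<omega> \<in> space M. G t i \<omega> = k}
           = zmg_p (1 - \<alpha> / ((1 - \<alpha>) * \<mu>)) ((1 - \<alpha>) * \<mu>) k"
    and recursion: "\<And>t \<omega>. t \<ge> 1 \<Longrightarrow> \<omega> \<in> space M \<Longrightarrow>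
         X t \<omega> = (\<Sum>i = 1..X (t - 1) \<omega>. G t i \<omega>) + E t \<omega>"
    and X_dist: "\<And>t k. measure M {\<omega> \<in> space M. X t \<omega> = k} = geo_p \<mu> k"
    and h_pos: "h \<ge> 1"
  shows
    "let me = (1 - \<alpha> ^ h) * \<mu>;
         ps = 1 - \<alpha> ^ h / (1 + me);
         p = (me - \<alpha> ^ h) / (1 + me - \<alpha> ^ h);
         P = (\<lambda>i j. measure M {\<omega> \<in> space M. X (t + h) \<omega> = j \<and> X t \<omega> = i}
                      / measure M {\<omega> \<in> space M. X t \<omega> = i})
     in (\<forall>j::nat. P 0 j = geo_p me j) \<and>
        (\<forall>i::nat. \<forall>j::nat. i \<ge> 1 \<longrightarrow>
           P i j = geo_p me j * (ps ^ i + (\<Sum>m = 1..j. \<Sum>l = 1..m.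
                    (1 + 1 / me) ^ m * coefA l i ps * coefB l m p)))"
  proof -
  interpret ginar M X E G \<mu> \<alpha>
    by (intro ginar.intro ginar_axioms.intro) (fact assms)+
  define a where "a = \<alpha> ^ h"
  define me where "me = (1 - a) * \<mu>"
  have a0: "0 \<le> a" using alpha_pos by (simp add: a_def)
  have a1: "a < 1"
  proof -
    have "\<alpha> ^ h \<le> \<alpha>" using power_decreasing[of 1 h \<alpha>] h_pos alpha_pos alpha_lt1 by simp
    then show ?thesis using alpha_lt1 by (simp add: a_def)
  qed
  have me: "me > 0" using a1 mu_pos by (simp add: me_def)
  have Pij: "measure M {\<omega> \<in> space M. X (t + h) \<omega> = j \<and> X t \<omega> = i} / measure M {\<omega> \<in> space M. X t \<omega> = i}
      = fps_nth (Psif me * Phif me a ^ i) j" for i j :: nat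
  proof -
    have set: "{\<omega> \<in> space M. X (t + h) \<omega> = j \<and> X t \<omega> = i} = {\<omega>\<in>space M. X (t + h) \<omega> = j} \<inter> {\<omega>\<in>space M. X t \<omega> = i}"
      by auto
    have pos: "measure M {\<omega> \<in> space M. X t \<omega> = i} > 0"
      using X_dist[of t i] mu_pos by (simp add: geo_p_def)
    show ?thesis unfolding set final_prob[OF h_pos, of t j i] using pos by (simp add: a_def me_def)
  qed
  have F: "fps_nth (Psif me * Phif me a ^ i) j = geo_p me j * ((1 - a / (1 + me)) ^ i + (\<Sum>m = 1..j. \<Sum>l = 1..m.
                    (1 + 1 / me) ^ m * coefA l i (1 - a / (1 + me)) * coefB l m ((me - a) / (1 + me - a))))" for i j
    by (rule D_formula[OF me a0 a1])
  have A0: "coefA l 0 q = 0" if "l \<ge> 1" for l q using that by (simp add: coefA_def)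
  show ?thesis
    unfolding Let_def
  proof (intro conjI allI impI)
    fix j :: nat
    show "measure M {\<omega> \<in> space M. X (t + h) \<omega> = j \<and> X t \<omega> = 0} / measure M {\<omega> \<in> space M. X t \<omega> = 0} =
          geo_p ((1 - \<alpha> ^ h) * \<mu>) j"
      proof -
      have sum0: "(\<Sum>m = 1..j. \<Sum>l = 1..m. (1 + 1 / me) ^ m * coefA l 0 (1 - a / (1 + me)) * coefB l m ((me - a) / (1 + me - a))) = 0"
        by (intro sum.neutral ballI) (simp add: A0)
      show ?thesis unfolding Pij F sum0 by (simp add: me_def a_def)
    qed
  next
    fix i j :: nat assume "1 \<le> i"
    show "measure M {\<omega> \<in> space M. X (t + h) \<omega> = j \<and> X t \<omega> = i} / measure M {\<omega> \<in> space M. X t \<omega> = i} =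
         geo_p ((1 - \<alpha> ^ h) * \<mu>) j * ((1 - \<alpha> ^ h / (1 + (1 - \<alpha> ^ h) * \<mu>)) ^ i +
          (\<Sum>m = 1..j. \<Sum>l = 1..m. (1 + 1 / ((1 - \<alpha> ^ h) * \<mu>)) ^ m * coefA l i (1 - \<alpha> ^ h / (1 + (1 - \<alpha> ^ h) * \<mu>)) *
            coefB l m (((1 - \<alpha> ^ h) * \<mu> - \<alpha> ^ h) / (1 + (1 - \<alpha> ^ h) * \<mu> - \<alpha> ^ h))))"
      unfolding Pij F[of i j] unfolding me_def a_def by (rule refl)
  qed
qed


end
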